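(* Let $G_1$ and $G_2$ be groups, and for $t=1,2$ let $\vec H^{(t)}\colon\{1\}=H^{(t)}_0\triangleleft\dots\triangleleft H^{(t)}_n=G_t$ and $\vec K^{(t)}\colon\{1\}=K^{(t)}_0\triangleleft\dots\triangleleft K^{(t)}_n=G_t$ be composition series of $G_t$ (of the same length $n$). Let $\pi_t$ be the unique permutation of $\{1,\dots,n\}$ such that $H^{(t)}_i/H^{(t)}_{i-1}$ is subnormally down-and-up projective to $K^{(t)}_{\pi_t(i)}/K^{(t)}_{\pi_t(i)-1}$ for all $i$. If $\pi_1=\pi_2$, then the lattices $(\mathrm{CSL}(\vec H^{(1)},\vec K^{(1)});\subseteq)$ and $(\mathrm{CSL}(\vec H^{(2)},\vec K^{(2)});\subseteq)$ are isomorphic. That is, this permutation determines $\mathrm{CSL}(\vec H,\vec K)$ up to lattice isomorphism.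
   Context: For composition series $\vec H$, $\vec K$ of a group $G$, $\mathrm{CSL}(\vec H,\vec K)=\{H_i\cap K_j: 0\le i,j\le n\}$, ordered by inclusion; it is a lattice. For subnormal subgroups $A\triangleleft B$ and $C\triangleleft D$ of $G$, $B/A$ is subnormally down-and-up projective to $D/C$ if there are subnormal subgroups $X\triangleleft Y$ of $G$ with $AY=B$, $A\cap Y=X$, $CY=D$, $C\cap Y=X$. It is known (and used here) that for composition series $\vec H,\vec K$ of the same group there is a unique permutation $\pi$ of $\{1,\dots,n\}$ such that $H_i/H_{i-1}$ is subnormally down-and-up projective to $K_{\pi(i)}/K_{\pi(i)-1}$ for all $i$. *)

theory Defs
  imports "HOL-Algebra.Algebra" "HOL-Combinatorics.Permutations"
begin

definition simple_grp :: "('a, 'b) monoid_scheme \<Rightarrow> bool" where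
  "simple_grp G \<longleftrightarrow> group G \<and> carrier G \<noteq> {\<one>\<^bsub>G\<^esub>} \<and>
     (\<forall>N. N \<lhd> G \<longrightarrow> N = {\<one>\<^bsub>G\<^esub>} \<or> N = carrier G)"

definition comp_series :: "('a, 'b) monoid_scheme \<Rightarrow> (nat \<Rightarrow> 'a set) \<Rightarrow> nat \<Rightarrow> bool" where
  "comp_series G H n \<longleftrightarrow>
     H 0 = {\<one>\<^bsub>G\<^esub>} \<and> H n = carrier G \<and>
     (\<forall>i<n. subgroup (H (Suc i)) G \<and> H i \<lhd> (G\<lparr>carrier := H (Suc i)\<rparr>) \<and>
            simple_grp ((G\<lparr>carrier := H (Suc i)\<rparr>) Mod (H i)))"

definition subnormal :: "('a, 'b) monoid_scheme \<Rightarrow> 'a set \<Rightarrow> bool" where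
  "subnormal G Xs \<longleftrightarrow> (\<exists>Ch k. Ch 0 = Xs \<and> Ch k = carrier G \<and>
     (\<forall>i<k. subgroup (Ch (Suc i)) G \<and> Ch i \<lhd> (G\<lparr>carrier := Ch (Suc i)\<rparr>)))"

text \<open>For subnormal A normal in B and C normal in D: B/A is subnormally
  down-and-up projective to D/C.\<close>
definition sdu_proj :: "('a, 'b) monoid_scheme \<Rightarrow> 'a set \<Rightarrow> 'a set \<Rightarrow> 'a set \<Rightarrow> 'a set \<Rightarrow> bool" where
  "sdu_proj G A B C D \<longleftrightarrow> (\<exists>Xs Ys. subnormal G Xs \<and> subnormal G Ys \<and>
      Xs \<lhd> (G\<lparr>carrier := Ys\<rparr>) \<and>
      A <#>\<^bsub>G\<^esub> Ys = B \<and> A \<inter> Ys = Xs \<and> C <#>\<^bsub>G\<^esub> Ys = D \<and> C \<inter> Ys = Xs)"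

definition CSL :: "(nat \<Rightarrow> 'a set) \<Rightarrow> (nat \<Rightarrow> 'a set) \<Rightarrow> nat \<Rightarrow> 'a set set" where
  "CSL H K n = {H i \<inter> K j | i j. i \<le> n \<and> j \<le> n}"

text \<open>Isomorphism of (set-)lattices ordered by inclusion: an order isomorphism,
  which for lattices is the same as a lattice isomorphism.\<close>
definition incl_lattice_iso :: "'a set set \<Rightarrow> 'c set set \<Rightarrow> bool" where
  "incl_lattice_iso L M \<longleftrightarrow> (\<exists>f. bij_betw f L M \<and>
     (\<forall>A\<in>L. \<forall>B\<in>L. A \<subseteq> B \<longleftrightarrow> f A \<subseteq> f B))"

end

theory Submission
  imports Defs
begin

lemma set_mult_memI: "h \<in> A \<Longrightarrow> k \<in> B \<Longrightarrow> h \<otimes>\<^bsub>G\<^esub> k \<in> A <#>\<^bsub>G\<^esub> B"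
  unfolding set_mult_def by (rule UN_I, assumption, rule UN_I, assumption, rule singletonI)

lemma set_mult_memE:
  assumes "x \<in> A <#>\<^bsub>G\<^esub> B"
  obtains h k where "h \<in> A" "k \<in> B" "x = h \<otimes>\<^bsub>G\<^esub> k"
  using assms unfolding set_mult_def by (elim UN_E singletonE) (rule that)

context group
begin

lemma cs_sub:
  assumes cs: "comp_series G H n" and "i \<le> n"
  shows "subgroup (H i) G"
proof (cases i)
  case 0
  then show ?thesis using cs unfolding comp_series_def by (simp add: triv_subgroup)
next
  case (Suc k)
  then show ?thesis using cs assms(2) unfolding comp_series_def by auto
qed

lemma cs_step_sub:
  assumes cs: "comp_series G H n" and "i < n"
  shows "H i \<subseteq> H (Suc i)"
proof -
  have "H i \<lhd> G\<lparr>carrier := H (Suc i)\<rparr>" using cs assms(2) unfolding comp_series_def by auto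
  then have "subgroup (H i) (G\<lparr>carrier := H (Suc i)\<rparr>)" by (rule normal_imp_subgroup)
  then show ?thesis using subgroup.subset by fastforce
qed

lemma cs_mono:
  assumes cs: "comp_series G H n" and "i \<le> i'" "i' \<le> n"
  shows "H i \<subseteq> H i'"
  using assms(2,3)
proof (induction i' rule: dec_induct)
  case base then show ?case by simp
next
  case (step m)
  then show ?case using cs_step_sub[OF cs, of m] by auto
qed

lemma cs_neq:
  assumes cs: "comp_series G H n" and "i < n"
  shows "H i \<noteq> H (Suc i)"
proof
  assume eq: "H i = H (Suc i)"
  let ?B = "G\<lparr>carrier := H (Suc i)\<rparr>"
  have sim: "simple_grp (?B Mod H i)" using cs assms(2) unfolding comp_series_def by auto
  have sg: "subgroup (H (Suc i)) G" using cs assms(2) unfolding comp_series_def by auto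
  have "carrier (?B Mod H i) = {\<one>\<^bsub>?B Mod H i\<^esub>}"
  proof -
    have "carrier (?B Mod H i) = rcosets\<^bsub>?B\<^esub> (H i)" by (simp add: FactGroup_def)
    also have "\<dots> = {H i}"
    proof -
      have "H (Suc i) #>\<^bsub>?B\<^esub> x = H (Suc i)" if "x \<in> H (Suc i)" for x
        using subgroup.rcos_const[OF sg group_axioms that] unfolding r_coset_def by simp
      moreover have "\<one> \<in> H (Suc i)" using sg subgroup.one_closed by blast
      ultimately show ?thesis unfolding RCOSETS_def eq by force
    qed
    finally show ?thesis by (simp add: FactGroup_def)
  qed
  then show False using sim unfolding simple_grp_def by blast
qed

lemma cs_simple:
  assumes cs: "comp_series G H n" and "i < n"
    and N: "N \<lhd> G\<lparr>carrier := H (Suc i)\<rparr>" and sub: "H i \<subseteq> N"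
  shows "N = H i \<or> N = H (Suc i)"
proof -
  let ?B = "G\<lparr>carrier := H (Suc i)\<rparr>"
  have sim: "simple_grp (?B Mod H i)" using cs assms(2) unfolding comp_series_def by auto
  have sg: "subgroup (H (Suc i)) G" using cs assms(2) unfolding comp_series_def by auto
  have nH: "H i \<lhd> ?B" using cs assms(2) unfolding comp_series_def by auto
  have gB: "group ?B" using subgroup_imp_group[OF sg] .
  interpret nHi: normal "H i" ?B by (rule nH)
  interpret nN: normal N ?B by (rule N)
  have gQ: "group (?B Mod H i)" by (rule nHi.factorgroup_is_group)
  have rcf: "(#>\<^bsub>?B\<^esub>) = (#>)" by (intro ext) (simp add: r_coset_def)
  have hom: "group_hom ?B (?B Mod H i) (\<lambda>a. H i #>\<^bsub>?B\<^esub> a)"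
    using nHi.r_coset_hom_Mod gQ gB unfolding group_hom_def group_hom_axioms_def by (simp add: rcf)
  have surj: "(\<lambda>a. H i #>\<^bsub>?B\<^esub> a) ` carrier ?B = carrier (?B Mod H i)"
    by (auto simp add: FactGroup_def RCOSETS_def)
  have nM: "(\<lambda>a. H i #>\<^bsub>?B\<^esub> a) ` N \<lhd> (?B Mod H i)"
    by (rule nN.surj_hom_normal_subgroup[OF hom surj])
  have NB: "N \<subseteq> H (Suc i)" using nN.subset by simp
  have HB: "H i \<subseteq> H (Suc i)" using nHi.subset by simp
  from sim nM have "(\<lambda>a. H i #>\<^bsub>?B\<^esub> a) ` N = {\<one>\<^bsub>?B Mod H i\<^esub>} \<or>
      (\<lambda>a. H i #>\<^bsub>?B\<^esub> a) ` N = carrier (?B Mod H i)"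
    unfolding simple_grp_def by blast
  then show ?thesis
  proof
    assume "(\<lambda>a. H i #>\<^bsub>?B\<^esub> a) ` N = {\<one>\<^bsub>?B Mod H i\<^esub>}"
    then have "\<And>x. x \<in> N \<Longrightarrow> H i #>\<^bsub>?B\<^esub> x = H i" by (auto simp add: FactGroup_def)
    then have "N \<subseteq> H i"
    proof (intro subsetI)
      fix x assume "x \<in> N" 
      then have "H i #>\<^bsub>?B\<^esub> x = H i" using \<open>\<And>x. x \<in> N \<Longrightarrow> H i #>\<^bsub>?B\<^esub> x = H i\<close> by blast
      moreover have "x \<in> H i #>\<^bsub>?B\<^esub> x" using \<open>x \<in> N\<close> NB
        by (metis gB group.rcos_self nHi.subgroup_axioms partial_object.select_convs(1) partial_object.surjective partial_object.update_convs(1) subsetD)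
      ultimately show "x \<in> H i" by simp
    qed
    then show ?thesis using sub by blast
  next
    assume a: "(\<lambda>a. H i #>\<^bsub>?B\<^esub> a) ` N = carrier (?B Mod H i)"
    have "H (Suc i) \<subseteq> N"
    proof
      fix y assume y: "y \<in> H (Suc i)"
      then have "H i #>\<^bsub>?B\<^esub> y \<in> carrier (?B Mod H i)" using surj by auto
      then have "H i #>\<^bsub>?B\<^esub> y \<in> (\<lambda>a. H i #>\<^bsub>?B\<^esub> a) ` N" using a by simp
      then obtain x where x: "x \<in> N" "H i #>\<^bsub>?B\<^esub> y = H i #>\<^bsub>?B\<^esub> x" by (rule imageE)
      have "y \<in> H i #>\<^bsub>?B\<^esub> y" using y
        by (metis gB group.rcos_self nHi.subgroup_axioms partial_object.select_convs(1) partial_object.surjective partial_object.update_convs(1))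
      then have "y \<in> H i #>\<^bsub>?B\<^esub> x" using x by simp
      then obtain h where h: "h \<in> H i" "y = h \<otimes> x" unfolding r_coset_def by auto
      then show "y \<in> N" using sub x(1) nN.m_closed by auto
    qed
    then show ?thesis using NB by blast
  qed
qed

lemma sm_left:
  assumes "subgroup A G" "subgroup B G" shows "A \<subseteq> A <#> B"
proof
  fix x assume x: "x \<in> A"
  have xc: "x \<in> carrier G" by (rule subgroup.mem_carrier[OF assms(1) x])
  have o: "\<one> \<in> B" by (rule subgroup.one_closed[OF assms(2)])
  have "x \<otimes> \<one> \<in> A <#> B" by (rule set_mult_memI[OF x o])
  then show "x \<in> A <#> B" using xc by simp
qed

lemma sm_right:
  assumes "subgroup A G" "subgroup B G" shows "B \<subseteq> A <#> B"
proof
  fix x assume x: "x \<in> B"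
  have xc: "x \<in> carrier G" by (rule subgroup.mem_carrier[OF assms(2) x])
  have o: "\<one> \<in> A" by (rule subgroup.one_closed[OF assms(1)])
  have "\<one> \<otimes> x \<in> A <#> B" by (rule set_mult_memI[OF o x])
  then show "x \<in> A <#> B" using xc by simp
qed

lemma sm_sub:
  assumes "subgroup C G" "A \<subseteq> C" "B \<subseteq> C" shows "A <#> B \<subseteq> C"
proof
  fix x assume "x \<in> A <#> B"
  then obtain a b where ab: "a \<in> A" "b \<in> B" "x = a \<otimes> b" by (rule set_mult_memE)
  have "a \<in> C" "b \<in> C" using ab assms(2,3) by blast+
  then have "a \<otimes> b \<in> C" by (rule subgroup.m_closed[OF assms(1)])
  then show "x \<in> C" using ab(3) by simp
qed

lemma sm_swap:
  assumes "subgroup M G" "subgroup A G" "subgroup B G" "M \<subseteq> A <#> B"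
  shows "M \<subseteq> B <#> A"
proof
  fix x assume x: "x \<in> M"
  then have "inv x \<in> M" by (rule subgroup.m_inv_closed[OF assms(1)])
  then have "inv x \<in> A <#> B" using assms(4) by (rule subsetD[rotated])
  then obtain a b where ab: "a \<in> A" "b \<in> B" "inv x = a \<otimes> b" by (rule set_mult_memE)
  have xc: "x \<in> carrier G" by (rule subgroup.mem_carrier[OF assms(1) x])
  have ac: "a \<in> carrier G" by (rule subgroup.mem_carrier[OF assms(2) ab(1)])
  have bc: "b \<in> carrier G" by (rule subgroup.mem_carrier[OF assms(3) ab(2)])
  have "x = inv (inv x)" using xc by simp
  also have "\<dots> = inv b \<otimes> inv a" using ab ac bc by (simp add: inv_mult_group)
  finally have "x = inv b \<otimes> inv a" .
  moreover have "inv b \<in> B \<and> inv a \<in> A"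
    using subgroup.m_inv_closed[OF assms(3) ab(2)] subgroup.m_inv_closed[OF assms(2) ab(1)] by (rule conjI)
  ultimately show "x \<in> B <#> A" using set_mult_memI[of "inv b" B "inv a" A G] by simp
qed

lemma subnormal_sub:
  assumes "subnormal G Y" shows "Y \<subseteq> carrier G"
proof -
  obtain Ch k where ch: "Ch 0 = Y" "Ch k = carrier G"
    "\<forall>i<k. subgroup (Ch (Suc i)) G \<and> Ch i \<lhd> (G\<lparr>carrier := Ch (Suc i)\<rparr>)"
    using assms unfolding subnormal_def by blast
  show ?thesis
  proof (cases k)
    case 0 then show ?thesis using ch by simp
  next
    case (Suc k')
    then have "subgroup (Ch 1) G" "Ch 0 \<lhd> (G\<lparr>carrier := Ch 1\<rparr>)" using ch(3) by auto
    then show ?thesis using ch(1) normal_imp_subgroup[THEN subgroup.subset]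
      subgroup.subset by fastforce
  qed
qed

lemma cs_join:
  assumes csH: "comp_series G H n" and csK: "comp_series G K n"
    and i: "1 \<le> i" "i \<le> n" and m: "m \<le> n"
    and nsub: "\<not> (H i \<inter> K m \<subseteq> H (i-1))"
  shows "H (i-1) <#> (H i \<inter> K m) = H i"
proof -
  have sHi: "subgroup (H i) G" using cs_sub[OF csH i(2)] .
  have sHi1: "subgroup (H (i-1)) G" using cs_sub[OF csH] i by simp
  have Hsub: "H (i-1) \<subseteq> H i" using cs_mono[OF csH] i by simp
  have iS: "Suc (i-1) = i" using i by simp
  have nHi1: "H (i-1) \<lhd> G\<lparr>carrier := H i\<rparr>" using csH i unfolding comp_series_def
    by (metis iS Suc_le_eq)
  have sK: "\<And>m. m \<le> n \<Longrightarrow> subgroup (K m) G" using cs_sub[OF csK] .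
  from m have "\<not> (H i \<inter> K m \<subseteq> H (i-1)) \<longrightarrow> H (i-1) <#> (H i \<inter> K m) = H i"
  proof (induction m rule: inc_induct)
    case base
    have "K n = carrier G" using csK unfolding comp_series_def by simp
    then have "H i \<inter> K n = H i" using sHi subgroup.subset by blast
    moreover have "H (i-1) <#> H i = H i"
      using sm_right[OF sHi1 sHi] sm_sub[OF sHi Hsub] by blast
    ultimately show ?case by simp
  next
    case (step m)
    show ?case
    proof
      assume ns: "\<not> (H i \<inter> K m \<subseteq> H (i-1))"
      have "K m \<subseteq> K (Suc m)" using cs_step_sub[OF csK step(2)] .
      then have "\<not> (H i \<inter> K (Suc m) \<subseteq> H (i-1))" using ns by blast
      then have R1: "H (i-1) <#> (H i \<inter> K (Suc m)) = H i" using step(3) by blast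
      have nK: "K m \<lhd> G\<lparr>carrier := K (Suc m)\<rparr>" using csK step(2) unfolding comp_series_def by auto
      have "(H (i-1) <#> (H i \<inter> K m)) \<lhd> G\<lparr>carrier := H (i-1) <#> (H i \<inter> K (Suc m))\<rparr>"
        by (rule preliminary2[OF sHi nHi1 sK nK]) (use step(2) in simp)
      then have nR: "(H (i-1) <#> (H i \<inter> K m)) \<lhd> G\<lparr>carrier := H (Suc (i-1))\<rparr>"
        using R1 iS by simp
      have sI: "subgroup (H i \<inter> K m) G" using sHi sK step(2) subgroups_Inter_pair by simp
      have "H (i-1) \<subseteq> H (i-1) <#> (H i \<inter> K m)" by (rule sm_left[OF sHi1 sI])
      then have "H (i-1) <#> (H i \<inter> K m) = H (i-1) \<or> H (i-1) <#> (H i \<inter> K m) = H (Suc (i-1))"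
        using cs_simple[OF csH _ nR] i by simp
      moreover have "H i \<inter> K m \<subseteq> H (i-1) <#> (H i \<inter> K m)" by (rule sm_right[OF sHi1 sI])
      ultimately show "H (i-1) <#> (H i \<inter> K m) = H i" using ns iS by auto
    qed
  qed
  then show ?thesis using nsub by blast
qed

end

definition Pr :: "(nat \<Rightarrow> 'a set) \<Rightarrow> (nat \<Rightarrow> 'a set) \<Rightarrow> nat \<Rightarrow> nat \<Rightarrow> bool" where
  "Pr H K i j \<longleftrightarrow> \<not> (H i \<inter> K j \<subseteq> H (i-1)) \<and> H i \<inter> K (j-1) \<subseteq> H (i-1)"

context group
begin

lemma Pr_Q:
  assumes csH: "comp_series G H n" and csK: "comp_series G K n"
    and i: "1 \<le> i" "i \<le> n" and j: "1 \<le> j" "j \<le> n"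
  shows "Pr H K i j \<longleftrightarrow> \<not> (H i \<inter> K j \<subseteq> (H (i-1) \<inter> K j) <#> (H i \<inter> K (j-1)))"
proof -
  have sHi: "subgroup (H i) G" using cs_sub[OF csH i(2)] .
  have sHi1: "subgroup (H (i-1)) G" using cs_sub[OF csH] i by simp
  have sKj: "subgroup (K j) G" using cs_sub[OF csK j(2)] .
  have sKj1: "subgroup (K (j-1)) G" using cs_sub[OF csK] j by simp
  have Hsub: "H (i-1) \<subseteq> H i" using cs_mono[OF csH] i by simp
  have Ksub: "K (j-1) \<subseteq> K j" using cs_mono[OF csK] j by simp
  have sA: "subgroup (H (i-1) \<inter> K j) G" using sHi1 sKj subgroups_Inter_pair by simp
  have sB: "subgroup (H i \<inter> K (j-1)) G" using sHi sKj1 subgroups_Inter_pair by simp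
  show ?thesis
  proof
    assume P: "Pr H K i j"
    have "(H (i-1) \<inter> K j) <#> (H i \<inter> K (j-1)) \<subseteq> H (i-1)"
      using P unfolding Pr_def by (intro sm_sub[OF sHi1]) auto
    then show "\<not> (H i \<inter> K j \<subseteq> (H (i-1) \<inter> K j) <#> (H i \<inter> K (j-1)))"
      using P unfolding Pr_def by blast
  next
    assume Q: "\<not> (H i \<inter> K j \<subseteq> (H (i-1) \<inter> K j) <#> (H i \<inter> K (j-1)))"
    have 1: "\<not> (H i \<inter> K j \<subseteq> H (i-1))"
    proof
      assume "H i \<inter> K j \<subseteq> H (i-1)"
      then have "H i \<inter> K j \<subseteq> H (i-1) \<inter> K j" by blast
      then show False using Q sm_left[OF sA sB] by blast
    qed
    have 2: "H i \<inter> K (j-1) \<subseteq> H (i-1)"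
    proof (rule ccontr)
      assume ns: "\<not> (H i \<inter> K (j-1) \<subseteq> H (i-1))"
      have R: "H (i-1) <#> (H i \<inter> K (j-1)) = H i"
        using cs_join[OF csH csK i _ ns] j by simp
      have "H i \<inter> K j \<subseteq> (H (i-1) \<inter> K j) <#> (H i \<inter> K (j-1))"
      proof
        fix x assume x: "x \<in> H i \<inter> K j"
        then have "x \<in> H (i-1) <#> (H i \<inter> K (j-1))" using R by simp
        then obtain h u where hu: "h \<in> H (i-1)" "u \<in> H i \<inter> K (j-1)" "x = h \<otimes> u"
          by (rule set_mult_memE)
        have uH: "u \<in> H i" using hu(2) by simp
        have uc: "u \<in> carrier G" by (rule subgroup.mem_carrier[OF sHi uH])
        have hc: "h \<in> carrier G" by (rule subgroup.mem_carrier[OF sHi1 hu(1)])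
        have "x \<otimes> inv u = h" using hu(3) uc hc by (simp add: m_assoc)
        moreover have xK: "x \<in> K j" using x by simp
        moreover have uK: "u \<in> K j" using hu(2) Ksub by auto
        ultimately have "h \<in> K j"
          using subgroup.m_closed[OF sKj xK subgroup.m_inv_closed[OF sKj uK]] by simp
        then have "h \<in> H (i-1) \<inter> K j" using hu(1) by simp
        from set_mult_memI[OF this hu(2), of G]
        show "x \<in> (H (i-1) \<inter> K j) <#> (H i \<inter> K (j-1))" using hu(3) by simp
      qed
      then show False using Q by blast
    qed
    show "Pr H K i j" using 1 2 unfolding Pr_def by blast
  qed
qed

lemma Pr_sym:
  assumes csH: "comp_series G H n" and csK: "comp_series G K n"
    and i: "1 \<le> i" "i \<le> n" and j: "1 \<le> j" "j \<le> n"
  shows "Pr H K i j \<longleftrightarrow> Pr K H j i"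
proof -
  have sHi: "subgroup (H i) G" using cs_sub[OF csH i(2)] .
  have sHi1: "subgroup (H (i-1)) G" using cs_sub[OF csH] i by simp
  have sKj: "subgroup (K j) G" using cs_sub[OF csK j(2)] .
  have sKj1: "subgroup (K (j-1)) G" using cs_sub[OF csK] j by simp
  have sA: "subgroup (H (i-1) \<inter> K j) G" using sHi1 sKj subgroups_Inter_pair by simp
  have sB: "subgroup (H i \<inter> K (j-1)) G" using sHi sKj1 subgroups_Inter_pair by simp
  have sM: "subgroup (H i \<inter> K j) G" using sHi sKj subgroups_Inter_pair by simp
  have e1: "K j \<inter> H i = H i \<inter> K j" "K (j-1) \<inter> H i = H i \<inter> K (j-1)" "K j \<inter> H (i-1) = H (i-1) \<inter> K j"
    by blast+
  have "Pr K H j i \<longleftrightarrow> \<not> (H i \<inter> K j \<subseteq> (H i \<inter> K (j-1)) <#> (H (i-1) \<inter> K j))"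
    using Pr_Q[OF csK csH j i] e1 by simp
  then show ?thesis using Pr_Q[OF csH csK i j] sm_swap[OF sM sA sB] sm_swap[OF sM sB sA] by blast
qed

lemma Pr_unique:
  assumes csK: "comp_series G K n"
    and j: "1 \<le> j" "j \<le> n" and j': "1 \<le> j'" "j' \<le> n"
    and P: "Pr H K i j" "Pr H K i j'"
  shows "j = j'"
proof (rule ccontr)
  assume "j \<noteq> j'"
  then consider "j < j'" | "j' < j" by linarith
  then show False
  proof cases
    case 1
    then have "K j \<subseteq> K (j'-1)" using cs_mono[OF csK, of j "j'-1"] j' by simp
    then show False using P unfolding Pr_def by blast
  next
    case 2
    then have "K j' \<subseteq> K (j-1)" using cs_mono[OF csK, of j' "j-1"] j by simp
    then show False using P unfolding Pr_def by blast
  qed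
qed

lemma Pr_exists:
  assumes csH: "comp_series G H n" and csK: "comp_series G K n"
    and i: "1 \<le> i" "i \<le> n" and b: "b \<le> n" and nb: "\<not> (H i \<inter> K b \<subseteq> H (i-1))"
  shows "\<exists>j. 1 \<le> j \<and> j \<le> b \<and> Pr H K i j"
proof -
  define j where "j = (LEAST j. \<not> (H i \<inter> K j \<subseteq> H (i-1)))"
  have jP: "\<not> (H i \<inter> K j \<subseteq> H (i-1))" unfolding j_def by (rule LeastI[of _ b]) (rule nb)
  have jb: "j \<le> b" unfolding j_def by (rule Least_le) (rule nb)
  have j0: "j \<noteq> 0"
  proof
    assume "j = 0"
    then have "H i \<inter> K j \<subseteq> {\<one>}" using csK unfolding comp_series_def by auto
    moreover have "subgroup (H (i-1)) G" using cs_sub[OF csH, of "i-1"] i by simp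
    then have "\<one> \<in> H (i-1)" by (rule subgroup.one_closed)
    ultimately show False using jP by blast
  qed
  have "H i \<inter> K (j-1) \<subseteq> H (i-1)"
  proof -
    have "j - 1 < j" using j0 by simp
    then have "\<not> \<not> (H i \<inter> K (j-1) \<subseteq> H (i-1))" unfolding j_def by (rule not_less_Least)
    then show ?thesis by blast
  qed
  then show ?thesis using jP jb j0 unfolding Pr_def by (intro exI[of _ j]) auto
qed

lemma sdu_witness:
  assumes csH: "comp_series G H n" and csK: "comp_series G K n"
    and i: "1 \<le> i" "i \<le> n" and b: "1 \<le> b" "b \<le> n"
    and sdu: "sdu_proj G (H (i-1)) (H i) (K (b-1)) (K b)"
  shows "\<not> (H i \<inter> K b \<subseteq> H (i-1))"
proof -
  obtain Xs Ys where Y: "subnormal G Ys" "H (i-1) <#> Ys = H i" "K (b-1) <#> Ys = K b"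
    using sdu unfolding sdu_proj_def by blast
  have sHi1: "subgroup (H (i-1)) G" using cs_sub[OF csH] i by simp
  have sKb1: "subgroup (K (b-1)) G" using cs_sub[OF csK] b by simp
  have Yc: "Ys \<subseteq> carrier G" using subnormal_sub[OF Y(1)] .
  have "Ys \<subseteq> H i" 
  proof
    fix y assume "y \<in> Ys"
    then have "\<one> \<otimes> y \<in> H (i-1) <#> Ys" by (rule set_mult_memI[OF subgroup.one_closed[OF sHi1]])
    then show "y \<in> H i" using Y(2) Yc \<open>y \<in> Ys\<close> by auto
  qed
  moreover have "Ys \<subseteq> K b"
  proof
    fix y assume "y \<in> Ys"
    then have "\<one> \<otimes> y \<in> K (b-1) <#> Ys" by (rule set_mult_memI[OF subgroup.one_closed[OF sKb1]])
    then show "y \<in> K b" using Y(3) Yc \<open>y \<in> Ys\<close> by auto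
  qed
  moreover have "\<not> Ys \<subseteq> H (i-1)"
  proof
    assume "Ys \<subseteq> H (i-1)"
    then have "H i \<subseteq> H (i-1)" using sm_sub[OF sHi1, of "H (i-1)" Ys] Y(2) by auto
    moreover have "H (i-1) \<noteq> H (Suc (i-1))" using cs_neq[OF csH, of "i-1"] i by simp
    moreover have "H (i-1) \<subseteq> H i" using cs_mono[OF csH] i by simp
    ultimately show False using i by simp
  qed
  ultimately show ?thesis by blast
qed

end

lemma sdu_sym: "sdu_proj G A B C D \<Longrightarrow> sdu_proj G C D A B"
  unfolding sdu_proj_def by blast

context group
begin

lemma Pr_pi:
  assumes csH: "comp_series G H n" and csK: "comp_series G K n"
    and pp: "\<pi> permutes {1..n}"
    and sdu: "\<forall>i\<in>{1..n}. sdu_proj G (H (i - 1)) (H i) (K (\<pi> i - 1)) (K (\<pi> i))"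
    and i: "i \<in> {1..n}"
  shows "Pr H K i (\<pi> i)"
proof -
  let ?S = "{1..n::nat}"
  have piS: "\<And>i. i \<in> ?S \<Longrightarrow> \<pi> i \<in> ?S" using permutes_in_image[OF pp] by blast
  have ipp: "inv_into UNIV \<pi> permutes ?S" using permutes_inv[OF pp] .
  have ipiS: "\<And>j. j \<in> ?S \<Longrightarrow> inv_into UNIV \<pi> j \<in> ?S" using permutes_in_image[OF ipp] by blast
  have ex1: "\<exists>j. 1 \<le> j \<and> j \<le> \<pi> i \<and> Pr H K i j" if i: "i \<in> ?S" for i
  proof -
    have "\<not> (H i \<inter> K (\<pi> i) \<subseteq> H (i-1))"
      using sdu_witness[OF csH csK _ _ _ _ sdu[rule_format, OF i]] i piS[OF i] by auto
    then show ?thesis using Pr_exists[OF csH csK _ _ _] i piS[OF i] by auto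
  qed
  have ex2: "\<exists>i'. 1 \<le> i' \<and> i' \<le> inv_into UNIV \<pi> j \<and> Pr K H j i'" if j: "j \<in> ?S" for j
  proof -
    have e: "\<pi> (inv_into UNIV \<pi> j) = j" using permutes_inverses(1)[OF pp] .
    have "sdu_proj G (K (j - 1)) (K j) (H (inv_into UNIV \<pi> j - 1)) (H (inv_into UNIV \<pi> j))"
      using sdu_sym[OF sdu[rule_format, OF ipiS[OF j]]] e by simp
    then have "\<not> (K j \<inter> H (inv_into UNIV \<pi> j) \<subseteq> K (j-1))"
      using sdu_witness[OF csK csH] j ipiS[OF j] by auto
    then show ?thesis using Pr_exists[OF csK csH _ _ _] j ipiS[OF j] by auto
  qed
  define \<sigma> where "\<sigma> i = (SOME j. 1 \<le> j \<and> j \<le> \<pi> i \<and> Pr H K i j)" for i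
  define \<tau> where "\<tau> j = (SOME i'. 1 \<le> i' \<and> i' \<le> inv_into UNIV \<pi> j \<and> Pr K H j i')" for j
  have sig: "1 \<le> \<sigma> i \<and> \<sigma> i \<le> \<pi> i \<and> Pr H K i (\<sigma> i)" if "i \<in> ?S" for i
    unfolding \<sigma>_def by (rule someI_ex) (rule ex1[OF that])
  have tau: "1 \<le> \<tau> j \<and> \<tau> j \<le> inv_into UNIV \<pi> j \<and> Pr K H j (\<tau> j)" if "j \<in> ?S" for j
    unfolding \<tau>_def by (rule someI_ex) (rule ex2[OF that])
  have sigS: "\<sigma> i \<in> ?S" if "i \<in> ?S" for i using sig[OF that] piS[OF that] by auto
  have tauS: "\<tau> j \<in> ?S" if "j \<in> ?S" for j using tau[OF that] ipiS[OF that] by auto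
  have st: "\<sigma> (\<tau> j) = j" if j: "j \<in> ?S" for j
  proof -
    have "Pr H K (\<tau> j) j" using Pr_sym[OF csH csK] tau[OF j] tauS[OF j] j by auto
    moreover have "Pr H K (\<tau> j) (\<sigma> (\<tau> j))" using sig[OF tauS[OF j]] by blast
    ultimately show ?thesis using Pr_unique[OF csK] sigS[OF tauS[OF j]] j by auto
  qed
  have img: "\<sigma> ` ?S = ?S"
  proof
    show "\<sigma> ` ?S \<subseteq> ?S" using sigS by blast
    show "?S \<subseteq> \<sigma> ` ?S"
    proof
      fix j assume "j \<in> ?S"
      then show "j \<in> \<sigma> ` ?S" using st tauS by (metis imageI)
    qed
  qed
  have "card (\<sigma> ` ?S) = card ?S" by (simp only: img)
  then have inj: "inj_on \<sigma> ?S" by (intro eq_card_imp_inj_on) simp_all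
  have "sum id ?S = sum \<sigma> ?S" using sum.reindex[OF inj, of id] img by simp
  moreover have "sum id ?S = sum \<pi> ?S"
  proof -
    have e: "sum id (\<pi> ` ?S) = sum (id \<circ> \<pi>) ?S" by (rule sum.reindex[OF permutes_inj_on[OF pp]])
    then show ?thesis unfolding permutes_image[OF pp] by simp
  qed
  ultimately have "sum \<sigma> ?S = sum \<pi> ?S" by simp
  then have "\<sigma> i = \<pi> i" by (rule sum_mono_inv) (use sig i in auto)
  then show ?thesis using sig[OF i] by simp
qed

lemma key_H:
  assumes csH: "comp_series G H n" and csK: "comp_series G K n"
    and pp: "\<pi> permutes {1..n}"
    and sdu: "\<forall>i\<in>{1..n}. sdu_proj G (H (i - 1)) (H i) (K (\<pi> i - 1)) (K (\<pi> i))"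
    and i: "i \<in> {1..n}" and j: "j \<le> n"
  shows "H i \<inter> K j \<subseteq> H (i-1) \<longleftrightarrow> j < \<pi> i"
proof -
  have P: "Pr H K i (\<pi> i)" by (rule Pr_pi[OF csH csK pp sdu i])
  have piS: "\<pi> i \<in> {1..n}" using permutes_in_image[OF pp] i by blast
  show ?thesis
  proof
    assume a: "H i \<inter> K j \<subseteq> H (i-1)"
    show "j < \<pi> i"
    proof (rule ccontr)
      assume "\<not> j < \<pi> i"
      then have "K (\<pi> i) \<subseteq> K j" using cs_mono[OF csK] j by simp
      then show False using a P unfolding Pr_def by blast
    qed
  next
    assume "j < \<pi> i"
    then have "K j \<subseteq> K (\<pi> i - 1)" using cs_mono[OF csK] piS by simp
    then show "H i \<inter> K j \<subseteq> H (i-1)" using P unfolding Pr_def by blast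
  qed
qed

lemma key_K:
  assumes csH: "comp_series G H n" and csK: "comp_series G K n"
    and pp: "\<pi> permutes {1..n}"
    and sdu: "\<forall>i\<in>{1..n}. sdu_proj G (H (i - 1)) (H i) (K (\<pi> i - 1)) (K (\<pi> i))"
  shows "\<forall>j\<in>{1..n}. sdu_proj G (K (j - 1)) (K j) (H (inv_into UNIV \<pi> j - 1)) (H (inv_into UNIV \<pi> j))"
proof
  fix j assume j: "j \<in> {1..n}"
  have ipp: "inv_into UNIV \<pi> permutes {1..n}" using permutes_inv[OF pp] .
  have "inv_into UNIV \<pi> j \<in> {1..n}" using permutes_in_image[OF ipp] j by blast
  then show "sdu_proj G (K (j - 1)) (K j) (H (inv_into UNIV \<pi> j - 1)) (H (inv_into UNIV \<pi> j))"
    using sdu_sym[OF sdu[rule_format, of "inv_into UNIV \<pi> j"]] permutes_inverses(1)[OF pp] by simp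
qed

end

definition Cnd :: "(nat \<Rightarrow> nat) \<Rightarrow> nat \<Rightarrow> nat \<Rightarrow> nat \<Rightarrow> bool" where
  "Cnd p i j i' \<longleftrightarrow> (\<forall>s. i' < s \<and> s \<le> i \<longrightarrow> j < p s)"

lemma chain_cond:
  assumes mono: "\<And>a b. a \<le> b \<Longrightarrow> b \<le> n \<Longrightarrow> H a \<subseteq> H b"
    and key: "\<And>i j. i \<in> {1..n} \<Longrightarrow> j \<le> n \<Longrightarrow> (H i \<inter> K j \<subseteq> H (i-1) \<longleftrightarrow> j < p i)"
    and i: "i \<le> n" and i': "i' \<le> n" and j: "j \<le> n"
  shows "(H i \<inter> K j \<subseteq> H i') \<longleftrightarrow> Cnd p i j i'"
  using i
proof (induction i)
  case 0
  then show ?case using mono[of 0 i'] i' unfolding Cnd_def by auto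
next
  case (Suc k)
  show ?case
  proof (cases "Suc k \<le> i'")
    case True
    then show ?thesis using mono[of "Suc k" i'] i' unfolding Cnd_def by auto
  next
    case False
    have kS: "Suc k \<in> {1..n}" using Suc.prems by simp
    have IH: "(H k \<inter> K j \<subseteq> H i') \<longleftrightarrow> Cnd p k j i'" using Suc by simp
    show ?thesis
    proof (cases "j < p (Suc k)")
      case True
      then have "H (Suc k) \<inter> K j \<subseteq> H k" using key[OF kS j] by simp
      moreover have "H k \<subseteq> H (Suc k)" using mono[of k "Suc k"] Suc.prems by simp
      ultimately have "H (Suc k) \<inter> K j = H k \<inter> K j" by blast
      moreover have "Cnd p (Suc k) j i' \<longleftrightarrow> Cnd p k j i'"
        using True unfolding Cnd_def by (metis le_Suc_eq)
      ultimately show ?thesis using IH by simp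
    next
      case False2: False
      then have "\<not> H (Suc k) \<inter> K j \<subseteq> H k" using key[OF kS j] by simp
      moreover have "H i' \<subseteq> H k" using mono[of i' k] False Suc.prems by simp
      ultimately have "\<not> H (Suc k) \<inter> K j \<subseteq> H i'" by blast
      moreover have "\<not> Cnd p (Suc k) j i'" using False False2 unfolding Cnd_def by (metis not_le order_refl)
      ultimately show ?thesis by simp
    qed
  qed
qed

lemma order_char:
  assumes grp: "group G" and csH: "comp_series G H n" and csK: "comp_series G K n"
    and pp: "\<pi> permutes {1..n}"
    and sdu: "\<forall>i\<in>{1..n}. sdu_proj G (H (i - 1)) (H i) (K (\<pi> i - 1)) (K (\<pi> i))"
    and le: "i \<le> n" "j \<le> n" "i' \<le> n" "j' \<le> n"
  shows "(H i \<inter> K j \<subseteq> H i' \<inter> K j') \<longleftrightarrow> Cnd \<pi> i j i' \<and> Cnd (inv_into UNIV \<pi>) j i j'"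
proof -
  have ipp: "inv_into UNIV \<pi> permutes {1..n}" using permutes_inv[OF pp] .
  have sdu2: "\<forall>j\<in>{1..n}. sdu_proj G (K (j - 1)) (K j) (H (inv_into UNIV \<pi> j - 1)) (H (inv_into UNIV \<pi> j))"
    using group.key_K[OF grp csH csK pp sdu] .
  have a: "(H i \<inter> K j \<subseteq> H i') \<longleftrightarrow> Cnd \<pi> i j i'"
    by (rule chain_cond[where n=n])
       (use group.cs_mono[OF grp csH] group.key_H[OF grp csH csK pp sdu] le in auto)
  have b: "(K j \<inter> H i \<subseteq> K j') \<longleftrightarrow> Cnd (inv_into UNIV \<pi>) j i j'"
    by (rule chain_cond[where n=n])
       (use group.cs_mono[OF grp csK] group.key_H[OF grp csK csH ipp sdu2] le in auto)
  have "K j \<inter> H i = H i \<inter> K j" by blast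
  then show ?thesis using a b by auto
qed

theorem corollary3p4:
  fixes G1 :: "('a, 'b) monoid_scheme" and G2 :: "('c, 'd) monoid_scheme"
    and H1 K1 :: "nat \<Rightarrow> 'a set" and H2 K2 :: "nat \<Rightarrow> 'c set"
    and n :: nat and \<pi> :: "nat \<Rightarrow> nat"
  assumes "group G1" and "group G2"
    and "comp_series G1 H1 n" and "comp_series G1 K1 n"
    and "comp_series G2 H2 n" and "comp_series G2 K2 n"
    and "\<pi> permutes {1..n}"
    and "\<forall>i\<in>{1..n}. sdu_proj G1 (H1 (i - 1)) (H1 i) (K1 (\<pi> i - 1)) (K1 (\<pi> i))"
    and "\<forall>i\<in>{1..n}. sdu_proj G2 (H2 (i - 1)) (H2 i) (K2 (\<pi> i - 1)) (K2 (\<pi> i))"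
  shows "incl_lattice_iso (CSL H1 K1 n) (CSL H2 K2 n)"
proof -
  have ch: "(H1 i \<inter> K1 j \<subseteq> H1 i' \<inter> K1 j') \<longleftrightarrow> (H2 i \<inter> K2 j \<subseteq> H2 i' \<inter> K2 j')"
    if le: "i \<le> n" "j \<le> n" "i' \<le> n" "j' \<le> n" for i j i' j'
    using trans[OF order_char[OF assms(1,3,4,7,8) le] sym[OF order_char[OF assms(2,5,6,7,9) le]]] .
  define F where "F Z = (THE Y. \<exists>i j. i \<le> n \<and> j \<le> n \<and> Z = H1 i \<inter> K1 j \<and> Y = H2 i \<inter> K2 j)" for Z
  have Fv: "F (H1 i \<inter> K1 j) = H2 i \<inter> K2 j" if ij: "i \<le> n" "j \<le> n" for i j
    unfolding F_def
  proof (rule the_equality)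
    show "\<exists>i' j'. i' \<le> n \<and> j' \<le> n \<and> H1 i \<inter> K1 j = H1 i' \<inter> K1 j' \<and> H2 i \<inter> K2 j = H2 i' \<inter> K2 j'"
      by (rule exI[of _ i], rule exI[of _ j]) (simp add: ij)
  next
    fix Y assume "\<exists>i' j'. i' \<le> n \<and> j' \<le> n \<and> H1 i \<inter> K1 j = H1 i' \<inter> K1 j' \<and> Y = H2 i' \<inter> K2 j'"
    then obtain a b where a: "a \<le> n" "b \<le> n" "H1 i \<inter> K1 j = H1 a \<inter> K1 b" "Y = H2 a \<inter> K2 b"
      by (elim exE conjE) (rule that, assumption+)
    have "H1 a \<inter> K1 b \<subseteq> H1 i \<inter> K1 j" using a(3) by (rule equalityD2)
    then have s1: "H2 a \<inter> K2 b \<subseteq> H2 i \<inter> K2 j" using ch[OF a(1,2) ij] by (rule iffD1[rotated])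
    have "H1 i \<inter> K1 j \<subseteq> H1 a \<inter> K1 b" using a(3) by (rule equalityD1)
    then have s2: "H2 i \<inter> K2 j \<subseteq> H2 a \<inter> K2 b" using ch[OF ij a(1,2)] by (rule iffD1[rotated])
    show "Y = H2 i \<inter> K2 j" unfolding a(4) using s1 s2 by (rule equalityI)
  qed
  have L1: "CSL H1 K1 n = {H1 i \<inter> K1 j | i j. i \<le> n \<and> j \<le> n}" by (simp add: CSL_def)
  have L2: "CSL H2 K2 n = {H2 i \<inter> K2 j | i j. i \<le> n \<and> j \<le> n}" by (simp add: CSL_def)
  have ord: "\<forall>A\<in>CSL H1 K1 n. \<forall>B\<in>CSL H1 K1 n. A \<subseteq> B \<longleftrightarrow> F A \<subseteq> F B"
  proof (intro ballI)
    fix A B assume A: "A \<in> CSL H1 K1 n" and B: "B \<in> CSL H1 K1 n"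
    obtain i j where ij: "i \<le> n" "j \<le> n" "A = H1 i \<inter> K1 j" using A unfolding L1 by blast
    obtain i' j' where ij': "i' \<le> n" "j' \<le> n" "B = H1 i' \<inter> K1 j'" using B unfolding L1 by blast
    show "A \<subseteq> B \<longleftrightarrow> F A \<subseteq> F B"
      unfolding ij(3) ij'(3) Fv[OF ij(1,2)] Fv[OF ij'(1,2)] by (rule ch[OF ij(1,2) ij'(1,2)])
  qed
  have inj: "inj_on F (CSL H1 K1 n)"
  proof (rule inj_onI)
    fix A B assume "A \<in> CSL H1 K1 n" "B \<in> CSL H1 K1 n" "F A = F B"
    then show "A = B" using ord by blast
  qed
  have img: "F ` CSL H1 K1 n = CSL H2 K2 n"
  proof
    show "F ` CSL H1 K1 n \<subseteq> CSL H2 K2 n"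
    proof
      fix Y assume "Y \<in> F ` CSL H1 K1 n"
      then obtain A where A: "A \<in> CSL H1 K1 n" "Y = F A" by blast
      obtain i j where ij: "i \<le> n" "j \<le> n" "A = H1 i \<inter> K1 j" using A(1) unfolding L1 by blast
      have "Y = H2 i \<inter> K2 j" using A(2) ij Fv by simp
      then show "Y \<in> CSL H2 K2 n" unfolding L2 using ij by blast
    qed
    show "CSL H2 K2 n \<subseteq> F ` CSL H1 K1 n"
    proof
      fix Y assume "Y \<in> CSL H2 K2 n"
      then obtain i j where ij: "i \<le> n" "j \<le> n" "Y = H2 i \<inter> K2 j" unfolding L2 by blast
      have "H1 i \<inter> K1 j \<in> CSL H1 K1 n" unfolding L1 using ij by blast
      moreover have "Y = F (H1 i \<inter> K1 j)" using ij Fv by simp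
      ultimately show "Y \<in> F ` CSL H1 K1 n" by blast
    qed
  qed
  show ?thesis unfolding incl_lattice_iso_def bij_betw_def
    by (intro exI[of _ F] conjI inj img ord)
qed

end
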